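(* Let $k\ge 3$, $n_1,\dots,n_k\ge 2$ and $r\in[k]$. The complete $k$-partite graph $K_{n_1,\dots,n_k}$ and the clique-star $CS^r_{n_1,\dots,n_k}$ (on the same vertex set) are not locally equivalent; that is, $\mathcal{O}(K_{n_1,\dots,n_k})\cap\mathcal{O}(CS^r_{n_1,\dots,n_k})=\emptyset$.
   Context: Both graphs are on vertex set $U_1\sqcup\cdots\sqcup U_k$ with $|U_i|=n_i$. $K_{n_1,\dots,n_k}$: edges exactly between different parts. $CS^r_{n_1,\dots,n_k}$: each $U_i$ is a clique, every vertex of $U_r$ is adjacent to every vertex of each $U_i$ with $i\ne r$, and no edges between $U_i,U_l$ for distinct $i,l\ne r$. The local complement $c_v(G)$ complements the edges among the neighbours of $v$; two graphs are locally equivalent if related by a finite sequence of local complements; $\mathcal{O}(G)$ is the set of graphs locally equivalent to $G$. *)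

theory Defs
  imports Main
begin

text \<open>Simple graphs on vertex type 'a, given by a (symmetric, irreflexive) adjacency
  predicate. Vertex set of the multipartite graphs: pairs (i,j) with i < k, j < n i;
  part U_i = {(i,j). j < n i} (parts indexed 0..k-1).\<close>

type_synonym 'a graph = "'a \<Rightarrow> 'a \<Rightarrow> bool"

definition local_complement :: "'a \<Rightarrow> 'a graph \<Rightarrow> 'a graph" where
  "local_complement v G = (\<lambda>x y.
     if x \<noteq> y \<and> G v x \<and> G v y then \<not> G x y else G x y)"

definition loc_step :: "'a set \<Rightarrow> 'a graph \<Rightarrow> 'a graph \<Rightarrow> bool" where
  "loc_step V G H \<longleftrightarrow> (\<exists>v\<in>V. H = local_complement v G)"

definition locally_equivalent :: "'a set \<Rightarrow> 'a graph \<Rightarrow> 'a graph \<Rightarrow> bool" where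
  "locally_equivalent V G H \<longleftrightarrow> (loc_step V)\<^sup>*\<^sup>* G H"

definition loc_orbit :: "'a set \<Rightarrow> 'a graph \<Rightarrow> 'a graph set" where
  "loc_orbit V G = {H. locally_equivalent V G H}"

definition mp_vertices :: "nat \<Rightarrow> (nat \<Rightarrow> nat) \<Rightarrow> (nat \<times> nat) set" where
  "mp_vertices k n = {(i, j). i < k \<and> j < n i}"

definition complete_multipartite :: "nat \<Rightarrow> (nat \<Rightarrow> nat) \<Rightarrow> (nat \<times> nat) graph" where
  "complete_multipartite k n = (\<lambda>x y.
     x \<in> mp_vertices k n \<and> y \<in> mp_vertices k n \<and> fst x \<noteq> fst y)"

definition clique_star :: "nat \<Rightarrow> (nat \<Rightarrow> nat) \<Rightarrow> nat \<Rightarrow> (nat \<times> nat) graph" where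
  "clique_star k n r = (\<lambda>x y.
     x \<in> mp_vertices k n \<and> y \<in> mp_vertices k n \<and> x \<noteq> y \<and>
     (fst x = fst y \<or> fst x = r \<or> fst y = r))"

end

theory Submission
  imports Defs "HOL-Library.Z2"
begin


declare sum_of_bool_eq[simp del]

definition vz :: "'a graph \<Rightarrow> 'a set \<Rightarrow> 'a set \<Rightarrow> bool" where
  "vz G Y S \<longleftrightarrow> (\<forall>y\<in>Y. (\<Sum>x\<in>S. of_bool (G x y) :: bit) = 0)"

definition PP :: "'a graph \<Rightarrow> 'a set \<Rightarrow> 'a set \<Rightarrow> bool" where
  "PP G X Y \<longleftrightarrow> (\<forall>S\<subseteq>X. vz G Y S \<longrightarrow> S = {})"

definition good :: "'a graph \<Rightarrow> bool" where
  "good G \<longleftrightarrow> (\<forall>x y. G x y = G y x) \<and> (\<forall>x. \<not> G x x)"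

lemma of_bool_not_bit: "(of_bool (\<not> a) :: bit) = of_bool a + 1"
  by (cases a) simp_all

lemma bit_swap: "(a::bit) = b + c \<Longrightarrow> c = a + b"
  by (cases a; cases b; cases c) simp_all

lemma lc_bit:
  assumes "x \<noteq> y"
  shows "(of_bool (local_complement v G x y) :: bit) =
         of_bool (G x y) + of_bool (G v x) * of_bool (G v y)"
  using assms by (cases "G v x"; cases "G v y"; cases "G x y") (auto simp: local_complement_def)

lemma good_lc: "good G \<Longrightarrow> good (local_complement v G)"
  unfolding good_def local_complement_def by auto

lemma lc_invol: "\<not> G v v \<Longrightarrow> local_complement v (local_complement v G) = G"
  unfolding local_complement_def by (intro ext) auto

lemma sum_lc:
  assumes "S \<subseteq> X" "y \<notin> X" "finite X"
  shows "(\<Sum>x\<in>S. of_bool (local_complement v G x y) :: bit) =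
         (\<Sum>x\<in>S. of_bool (G x y)) + (\<Sum>x\<in>S. of_bool (G v x)) * of_bool (G v y)"
proof -
  have "(\<Sum>x\<in>S. of_bool (local_complement v G x y) :: bit) =
        (\<Sum>x\<in>S. of_bool (G x y) + of_bool (G v x) * of_bool (G v y))"
    by (rule sum.cong[OF refl], rule lc_bit) (use assms in auto)
  also have "\<dots> = (\<Sum>x\<in>S. of_bool (G x y)) + (\<Sum>x\<in>S. of_bool (G v x)) * of_bool (G v y)"
    by (simp only: sum.distrib sum_distrib_right)
  finally show ?thesis .
qed

lemma stepX:
  assumes g: "good G" and v: "v \<in> X" and d: "X \<inter> Y = {}" and f: "finite X"
    and P: "PP G X Y"
  shows "PP (local_complement v G) X Y"
  unfolding PP_def
proof (intro allI impI)
  fix S assume SX: "S \<subseteq> X" and z: "vz (local_complement v G) Y S"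
  have fS: "finite S" using SX f finite_subset by blast
  define c where "c = (\<Sum>x\<in>S. of_bool (G v x) :: bit)"
  define T where "T = (if c = 0 then S else if v \<in> S then S - {v} else insert v S)"
  have TX: "T \<subseteq> X" using SX v by (auto simp: T_def)
  have sT: "(\<Sum>x\<in>T. of_bool (G x y) :: bit) = (\<Sum>x\<in>S. of_bool (G x y)) + c * of_bool (G v y)" for y
  proof (cases "c = 0")
    case True then show ?thesis by (simp add: T_def)
  next
    case False
    then have c1: "c = 1" by (metis bit_not_zero_iff)
    show ?thesis
    proof (cases "v \<in> S")
      case True
      have "(\<Sum>x\<in>S. of_bool (G x y) :: bit) = of_bool (G v y) + (\<Sum>x\<in>S - {v}. of_bool (G x y))"
        using True fS by (simp add: sum.remove del: sum_of_bool_eq)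
      then have "(\<Sum>x\<in>S - {v}. of_bool (G x y) :: bit) = (\<Sum>x\<in>S. of_bool (G x y)) + of_bool (G v y)"
        by (rule bit_swap)
      then show ?thesis using True False c1 by (simp add: T_def)
    next
      case False
      have "T = insert v S" using \<open>c \<noteq> 0\<close> False by (simp add: T_def)
      then have "(\<Sum>x\<in>T. of_bool (G x y) :: bit) = of_bool (G v y) + (\<Sum>x\<in>S. of_bool (G x y))"
        using fS False by (simp add: sum.insert)
      then show ?thesis using c1 by (metis add.commute mult_1_left)
    qed
  qed
  have "vz G Y T" unfolding vz_def
  proof
    fix y assume y: "y \<in> Y"
    then have "y \<notin> X" using d by auto
    then have "(\<Sum>x\<in>S. of_bool (local_complement v G x y) :: bit) = (\<Sum>x\<in>T. of_bool (G x y))"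
      using sum_lc[OF SX _ f] sT c_def by (simp add: mult.commute)
    then show "(\<Sum>x\<in>T. of_bool (G x y) :: bit) = 0" using z y by (simp add: vz_def)
  qed
  then have "T = {}" using P TX by (simp add: PP_def)
  then show "S = {}"
  proof (cases "c = 0")
    case False
    then have "v \<in> S" "S - {v} = {}" using \<open>T = {}\<close> by (auto simp: T_def split: if_splits)
    then have "S = {v}" by auto
    then have "c = 0" using g by (simp add: c_def good_def)
    then show ?thesis using False by simp
  qed (simp add: T_def)
qed


lemma stepY:
  assumes g: "good G" and v: "v \<in> Y" and d: "X \<inter> Y = {}" and f: "finite X"
    and P: "PP G X Y"
  shows "PP (local_complement v G) X Y"
  unfolding PP_def
proof (intro allI impI)
  fix S assume SX: "S \<subseteq> X" and z: "vz (local_complement v G) Y S"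
  define c where "c = (\<Sum>x\<in>S. of_bool (G v x) :: bit)"
  have vX: "v \<notin> X" using v d by auto
  have "(\<Sum>x\<in>S. of_bool (local_complement v G x v) :: bit) = 0" using z v by (simp add: vz_def)
  then have "(\<Sum>x\<in>S. of_bool (G x v)) + c * of_bool (G v v) = (0::bit)"
    using sum_lc[OF SX vX f] c_def by simp
  then have "(\<Sum>x\<in>S. of_bool (G x v)) = (0::bit)" using g by (simp add: good_def)
  moreover have "(\<Sum>x\<in>S. of_bool (G x v)) = c" unfolding c_def
    by (rule sum.cong[OF refl]) (use g in \<open>simp add: good_def\<close>)
  ultimately have c0: "c = 0" by simp
  have "vz G Y S" unfolding vz_def
  proof
    fix y assume y: "y \<in> Y"
    then have "y \<notin> X" using d by auto
    then have "(\<Sum>x\<in>S. of_bool (local_complement v G x y) :: bit) = (\<Sum>x\<in>S. of_bool (G x y))"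
      using sum_lc[OF SX _ f] c0 c_def by simp
    then show "(\<Sum>x\<in>S. of_bool (G x y) :: bit) = 0" using z y by (simp add: vz_def)
  qed
  then show "S = {}" using P SX by (simp add: PP_def)
qed

lemma step_iff:
  assumes g: "good G" and v: "v \<in> X \<union> Y" and d: "X \<inter> Y = {}" and f: "finite X"
  shows "PP (local_complement v G) X Y = PP G X Y"
proof
  have g': "good (local_complement v G)" using g by (rule good_lc)
  have inv: "local_complement v (local_complement v G) = G"
    using g by (intro lc_invol) (simp add: good_def)
  show "PP G X Y" if "PP (local_complement v G) X Y"
  proof (cases "v \<in> X")
    case True then show ?thesis using stepX[OF g' True d f that] inv by simp
  next
    case False then have "v \<in> Y" using v by simp
    then show ?thesis using stepY[OF g' \<open>v \<in> Y\<close> d f that] inv by simp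
  qed
  show "PP (local_complement v G) X Y" if "PP G X Y"
  proof (cases "v \<in> X")
    case True then show ?thesis using stepX[OF g True d f that] by simp
  next
    case False then have "v \<in> Y" using v by simp
    then show ?thesis using stepY[OF g \<open>v \<in> Y\<close> d f that] by simp
  qed
qed

lemma equiv_inv:
  assumes "(loc_step V)\<^sup>*\<^sup>* G H" and "good G" and "V \<subseteq> X \<union> Y" and "X \<inter> Y = {}" and "finite X"
  shows "good H \<and> (PP H X Y = PP G X Y)"
  using assms(1)
proof (induction rule: rtranclp_induct)
  case base then show ?case using assms by simp
next
  case (step H H')
  then obtain v where "v \<in> V" "H' = local_complement v H" by (auto simp: loc_step_def)
  moreover have "v \<in> X \<union> Y" using \<open>v \<in> V\<close> assms(3) by blast
  ultimately show ?case using step.IH step_iff[of H v X Y, OF _ _ assms(4,5)] good_lc[of H v] by simp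
qed



lemma bit_of_nat_0: "(of_nat m :: bit) = 0 \<longleftrightarrow> even m"
  by (metis bit_numeral_even dvd_0_left_iff even_of_nat)

definition TX :: "nat \<Rightarrow> (nat \<times> nat) set" where
  "TX k = (\<lambda>i. (i, 0)) ` {..<k}"

lemma PP_char:
  assumes "\<forall>i<k. n i \<ge> 2"
  shows "PP G (TX k) (mp_vertices k n - TX k) \<longleftrightarrow>
    (\<forall>I\<subseteq>{..<k}. (\<forall>j m. j < k \<and> 0 < m \<and> m < n j \<longrightarrow> even (card {i\<in>I. G (i,0) (j,m)})) \<longrightarrow> I = {})"
proof -
  have inj: "inj (\<lambda>i::nat. (i, 0::nat))" by (auto simp: inj_def)
  have Y: "(j, m) \<in> mp_vertices k n - TX k \<longleftrightarrow> j < k \<and> 0 < m \<and> m < n j" for j m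
    by (auto simp: mp_vertices_def TX_def)
  have vz: "vz G (mp_vertices k n - TX k) ((\<lambda>i. (i, 0)) ` I) \<longleftrightarrow>
      (\<forall>j m. j < k \<and> 0 < m \<and> m < n j \<longrightarrow> even (card {i\<in>I. G (i,0) (j,m)}))"
    if I: "I \<subseteq> {..<k}" for I
  proof -
    have fI: "finite I" using I finite_subset by blast
    have "(\<Sum>x\<in>(\<lambda>i. (i, 0)) ` I. of_bool (G x y) :: bit) = of_nat (card {i\<in>I. G (i,0) y})" for y
    proof -
      have "(\<Sum>x\<in>(\<lambda>i. (i, 0)) ` I. of_bool (G x y) :: bit) = (\<Sum>i\<in>I. of_bool (G (i,0) y))"
        using sum.reindex[OF inj_on_subset[OF inj subset_UNIV], of "\<lambda>x. of_bool (G x y) :: bit" I]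
        by (simp only: o_def)
      also have "\<dots> = of_nat (card (I \<inter> {i. G (i,0) y}))" using fI by (simp add: sum_of_bool_eq)
      finally show ?thesis by (simp add: Int_def conj_commute)
    qed
    note eq = this
    show ?thesis unfolding vz_def
    proof
      assume A: "\<forall>y\<in>mp_vertices k n - TX k. (\<Sum>x\<in>(\<lambda>i. (i, 0)) ` I. of_bool (G x y) :: bit) = 0"
      show "\<forall>j m. j < k \<and> 0 < m \<and> m < n j \<longrightarrow> even (card {i\<in>I. G (i,0) (j,m)})"
      proof (intro allI impI)
        fix j m assume "j < k \<and> 0 < m \<and> m < n j"
        then have "(j, m) \<in> mp_vertices k n - TX k" using Y by blast
        then have "(of_nat (card {i\<in>I. G (i,0) (j,m)}) :: bit) = 0" using A eq by metis
        then show "even (card {i\<in>I. G (i,0) (j,m)})" by (simp only: bit_of_nat_0)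
      qed
    next
      assume A: "\<forall>j m. j < k \<and> 0 < m \<and> m < n j \<longrightarrow> even (card {i\<in>I. G (i,0) (j,m)})"
      show "\<forall>y\<in>mp_vertices k n - TX k. (\<Sum>x\<in>(\<lambda>i. (i, 0)) ` I. of_bool (G x y) :: bit) = 0"
      proof
        fix y assume y: "y \<in> mp_vertices k n - TX k"
        obtain j m where jm: "y = (j, m)" by (cases y)
        then have "j < k \<and> 0 < m \<and> m < n j" using Y y by blast
        then have "even (card {i\<in>I. G (i,0) (j,m)})" using A by blast
        then show "(\<Sum>x\<in>(\<lambda>i. (i, 0)) ` I. of_bool (G x y) :: bit) = 0"
          using eq jm by (simp only: bit_of_nat_0)
      qed
    qed
  qed
  show ?thesis
  proof
    assume P: "PP G (TX k) (mp_vertices k n - TX k)"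
    show "\<forall>I\<subseteq>{..<k}. (\<forall>j m. j < k \<and> 0 < m \<and> m < n j \<longrightarrow> even (card {i\<in>I. G (i,0) (j,m)})) \<longrightarrow> I = {}"
    proof (intro allI impI)
      fix I assume I: "I \<subseteq> {..<k}" and e: "\<forall>j m. j < k \<and> 0 < m \<and> m < n j \<longrightarrow> even (card {i\<in>I. G (i,0) (j,m)})"
      have "(\<lambda>i. (i, 0)) ` I \<subseteq> TX k" using I by (auto simp: TX_def)
      then have "(\<lambda>i. (i, 0::nat)) ` I = {}" using P vz[OF I] e unfolding PP_def by blast
      then show "I = {}" by simp
    qed
  next
    assume R: "\<forall>I\<subseteq>{..<k}. (\<forall>j m. j < k \<and> 0 < m \<and> m < n j \<longrightarrow> even (card {i\<in>I. G (i,0) (j,m)})) \<longrightarrow> I = {}"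
    show "PP G (TX k) (mp_vertices k n - TX k)" unfolding PP_def
    proof (intro allI impI)
      fix S assume S: "S \<subseteq> TX k" and z: "vz G (mp_vertices k n - TX k) S"
      define I where "I = {i. (i, 0) \<in> S}"
      have SI: "S = (\<lambda>i. (i, 0)) ` I" using S by (auto simp: I_def TX_def)
      have I: "I \<subseteq> {..<k}" using S by (auto simp: I_def TX_def)
      have "I = {}" using R I vz[OF I] z SI by simp
      then show "S = {}" using SI by simp
    qed
  qed
qed



lemma K_set:
  assumes "\<forall>i<k. n i \<ge> 2" "I \<subseteq> {..<k}" "j < k" "m < n j"
  shows "{i\<in>I. complete_multipartite k n (i,0) (j,m)} = I - {j}"
  using assms by (auto simp: complete_multipartite_def mp_vertices_def)

lemma C_set:
  assumes "\<forall>i<k. n i \<ge> 2" "I \<subseteq> {..<k}" "j < k" "0 < m" "m < n j"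
  shows "{i\<in>I. clique_star k n r (i,0) (j,m)} = (if j = r then I else I \<inter> {j, r})"
  using assms by (auto simp: clique_star_def mp_vertices_def)

lemma PP_K:
  assumes n: "\<forall>i<k. n i \<ge> 2" and k: "k \<ge> 3"
  shows "PP (complete_multipartite k n) (TX k) (mp_vertices k n - TX k) \<longleftrightarrow> even k"
  unfolding PP_char[OF n]
proof
  assume R: "\<forall>I\<subseteq>{..<k}. (\<forall>j m. j < k \<and> 0 < m \<and> m < n j \<longrightarrow> even (card {i\<in>I. complete_multipartite k n (i,0) (j,m)})) \<longrightarrow> I = {}"
  show "even k"
  proof (rule ccontr)
    assume o: "odd k"
    have "\<forall>j m. j < k \<and> 0 < m \<and> m < n j \<longrightarrow> even (card {i\<in>{..<k}. complete_multipartite k n (i,0) (j,m)})"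
    proof (intro allI impI)
      fix j m assume jm: "j < k \<and> 0 < m \<and> m < n j"
      have "{i\<in>{..<k}. complete_multipartite k n (i,0) (j,m)} = {..<k} - {j}"
        using K_set[OF n _, of "{..<k}" j m] jm by simp
      then show "even (card {i\<in>{..<k}. complete_multipartite k n (i,0) (j,m)})"
        using o jm by simp
    qed
    then have "{..<k} = ({}::nat set)" using R by blast
    moreover have "(0::nat) \<in> {..<k}" using k by simp
    ultimately show False by blast
  qed
next
  assume e: "even k"
  show "\<forall>I\<subseteq>{..<k}. (\<forall>j m. j < k \<and> 0 < m \<and> m < n j \<longrightarrow> even (card {i\<in>I. complete_multipartite k n (i,0) (j,m)})) \<longrightarrow> I = {}"
  proof (intro allI impI; rule ccontr)
    fix I assume I: "I \<subseteq> {..<k}" and h: "\<forall>j m. j < k \<and> 0 < m \<and> m < n j \<longrightarrow> even (card {i\<in>I. complete_multipartite k n (i,0) (j,m)})"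
      and ne: "I \<noteq> {}"
    have fI: "finite I" using I finite_subset by blast
    have h1: "even (card (I - {j}))" if "j < k" for j
      using h[rule_format, of j 1] that n K_set[OF n I that, of 1] by auto
    show False
    proof (cases "even (card I)")
      case True
      obtain j where "j \<in> I" using ne by blast
      then have "j < k" "card (I - {j}) = card I - 1" "card I > 0" using I fI by (auto simp: card_gt_0_iff)
      then show False using h1 True by fastforce
    next
      case False
      then have "I \<noteq> {..<k}" using e by auto
      then obtain j where "j < k" "j \<notin> I" using I by blast
      then have "I - {j} = I" by blast
      then show False using h1[OF \<open>j < k\<close>] False by simp
    qed
  qed
qed

lemma PP_C:
  assumes n: "\<forall>i<k. n i \<ge> 2" and k: "k \<ge> 3" and r: "r < k"
  shows "PP (clique_star k n r) (TX k) (mp_vertices k n - TX k) \<longleftrightarrow> odd k"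
  unfolding PP_char[OF n]
proof
  assume R: "\<forall>I\<subseteq>{..<k}. (\<forall>j m. j < k \<and> 0 < m \<and> m < n j \<longrightarrow> even (card {i\<in>I. clique_star k n r (i,0) (j,m)})) \<longrightarrow> I = {}"
  show "odd k"
  proof (rule ccontr)
    assume o: "\<not> odd k"
    have "\<forall>j m. j < k \<and> 0 < m \<and> m < n j \<longrightarrow> even (card {i\<in>{..<k}. clique_star k n r (i,0) (j,m)})"
    proof (intro allI impI)
      fix j m assume jm: "j < k \<and> 0 < m \<and> m < n j"
      show "even (card {i\<in>{..<k}. clique_star k n r (i,0) (j,m)})"
      proof (cases "j = r")
        case True then show ?thesis using C_set[OF n _ _ _, of "{..<k}" j m] jm o by simp
      next
        case False
        then have "{..<k} \<inter> {j, r} = {j, r}" using jm r by auto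
        then show ?thesis using C_set[OF n _ _ _, of "{..<k}" j m] jm False by simp
      qed
    qed
    then have "{..<k} = ({}::nat set)" using R by blast
    moreover have "(0::nat) \<in> {..<k}" using k by simp
    ultimately show False by blast
  qed
next
  assume e: "odd k"
  show "\<forall>I\<subseteq>{..<k}. (\<forall>j m. j < k \<and> 0 < m \<and> m < n j \<longrightarrow> even (card {i\<in>I. clique_star k n r (i,0) (j,m)})) \<longrightarrow> I = {}"
  proof (intro allI impI; rule ccontr)
    fix I assume I: "I \<subseteq> {..<k}" and h: "\<forall>j m. j < k \<and> 0 < m \<and> m < n j \<longrightarrow> even (card {i\<in>I. clique_star k n r (i,0) (j,m)})"
      and ne: "I \<noteq> {}"
    have h1: "even (card (if j = r then I else I \<inter> {j, r}))" if "j < k" for j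
    proof -
      have "1 < n j" using n that by fastforce
      then show ?thesis using h[rule_format, of j 1] that C_set[OF n I that, of 1] by auto
    qed
    have single: False if "j < k" "j \<noteq> r" "I \<inter> {j, r} = {x}" for j x
      using h1[OF that(1)] that(2,3) by simp
    show False
    proof (cases "r \<in> I")
      case True
      show False
      proof (cases "I = {..<k}")
        case True then show False using h1[OF r] e by simp
      next
        case False
        then obtain j where "j < k" "j \<notin> I" using I by blast
        then have "j \<noteq> r" "I \<inter> {j, r} = {r}" using \<open>r \<in> I\<close> by auto
        then show False using single \<open>j < k\<close> by blast
      qed
    next
      case False
      obtain j where "j \<in> I" using ne by blast
      then have "j < k" "j \<noteq> r" "I \<inter> {j, r} = {j}" using I False by auto
      then show False using single by blast
    qed
  qed
qed

theorem theorem10: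
  fixes k r :: nat and n :: "nat \<Rightarrow> nat"
  assumes "k \<ge> 3" and "\<forall>i<k. n i \<ge> 2" and "r < k"
  shows "loc_orbit (mp_vertices k n) (complete_multipartite k n)
         \<inter> loc_orbit (mp_vertices k n) (clique_star k n r) = {}"
proof (rule ccontr)
  assume "loc_orbit (mp_vertices k n) (complete_multipartite k n)
         \<inter> loc_orbit (mp_vertices k n) (clique_star k n r) \<noteq> {}"
  then obtain H where
    h1: "(loc_step (mp_vertices k n))\<^sup>*\<^sup>* (complete_multipartite k n) H" and
    h2: "(loc_step (mp_vertices k n))\<^sup>*\<^sup>* (clique_star k n r) H"
    by (auto simp: loc_orbit_def locally_equivalent_def)
  have gK: "good (complete_multipartite k n)"
    by (auto simp: good_def complete_multipartite_def)
  have gC: "good (clique_star k n r)"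
    by (auto simp: good_def clique_star_def)
  have sub: "mp_vertices k n \<subseteq> TX k \<union> (mp_vertices k n - TX k)" by blast
  have dis: "TX k \<inter> (mp_vertices k n - TX k) = {}" by blast
  have fin: "finite (TX k)" by (simp add: TX_def)
  have "PP H (TX k) (mp_vertices k n - TX k) = PP (complete_multipartite k n) (TX k) (mp_vertices k n - TX k)"
    using equiv_inv[OF h1 gK sub dis fin] by simp
  moreover have "PP H (TX k) (mp_vertices k n - TX k) = PP (clique_star k n r) (TX k) (mp_vertices k n - TX k)"
    using equiv_inv[OF h2 gC sub dis fin] by simp
  ultimately show False using PP_K[OF assms(2,1)] PP_C[OF assms(2,1,3)] by simp
qed


end
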